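(* Let $k\ge2$ and let $\phi$ be a monotone $[k]$-edge-labeling of $K^{(2)}_n$ that minimizes the number of bad triples among all monotone $[k]$-edge-labelings of $K^{(2)}_n$. Then for every $2\le i\le k$, $$|X_i|+|X_{i+1}|\le|X_{i-2}|+|X_{i-1}|+2.$$
   Context: $K^{(2)}_n$ is the complete graph on $[n]$ with its natural order. A $[k]$-edge-labeling $\phi$ assigns to each pair $uv$ ($u<v$) a label $\phi(uv)\in\{1,\dots,k\}$; it is monotone if $\phi(uv)\le\phi(vw)$ whenever $u<v<w$. A triple $u<v<w$ is good if $\phi(uv)<\phi(vw)$ and bad otherwise. Define $\Phi_L(1)=0$ and $\Phi_L(v)=\max\{\phi(uv):u<v\}$ for $v>1$. For $0\le i\le k+1$ let $X_i=\{v\in[n]:\Phi_L(v)=i\}$. *)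

theory Defs
  imports Main
begin

text \<open>An edge labeling of the complete graph on [n] = {1..n} is a function phi with
  phi u v the label of the pair uv for u < v (values outside this range are irrelevant).\<close>

definition is_labeling :: "nat \<Rightarrow> nat \<Rightarrow> (nat \<Rightarrow> nat \<Rightarrow> nat) \<Rightarrow> bool" where
  "is_labeling n k phi \<longleftrightarrow>
     (\<forall>u v. 1 \<le> u \<and> u < v \<and> v \<le> n \<longrightarrow> phi u v \<in> {1..k})"

definition monotone_labeling :: "nat \<Rightarrow> nat \<Rightarrow> (nat \<Rightarrow> nat \<Rightarrow> nat) \<Rightarrow> bool" where
  "monotone_labeling n k phi \<longleftrightarrow> is_labeling n k phi \<and>
     (\<forall>u v w. 1 \<le> u \<and> u < v \<and> v < w \<and> w \<le> n \<longrightarrow> phi u v \<le> phi v w)"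

definition bad_triples :: "nat \<Rightarrow> (nat \<Rightarrow> nat \<Rightarrow> nat) \<Rightarrow> (nat \<times> nat \<times> nat) set" where
  "bad_triples n phi = {(u, v, w). 1 \<le> u \<and> u < v \<and> v < w \<and> w \<le> n \<and> \<not> phi u v < phi v w}"

definition num_bad :: "nat \<Rightarrow> (nat \<Rightarrow> nat \<Rightarrow> nat) \<Rightarrow> nat" where
  "num_bad n phi = card (bad_triples n phi)"

definition PhiL :: "(nat \<Rightarrow> nat \<Rightarrow> nat) \<Rightarrow> nat \<Rightarrow> nat" where
  "PhiL phi v = (if v \<le> 1 then 0 else Max {phi u v | u. 1 \<le> u \<and> u < v})"

definition Xset :: "nat \<Rightarrow> (nat \<Rightarrow> nat \<Rightarrow> nat) \<Rightarrow> nat \<Rightarrow> nat set" where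
  "Xset n phi i = {v. 1 \<le> v \<and> v \<le> n \<and> PhiL phi v = i}"

end

theory Submission imports Defs begin

lemma PhiL_set_eq: "{(phi::nat\<Rightarrow>nat\<Rightarrow>nat) u v | u. 1 \<le> u \<and> u < v} = (\<lambda>u. phi u v) ` {1..<v}"
  by auto

lemma PhiL_fin: "finite {(phi::nat\<Rightarrow>nat\<Rightarrow>nat) u v | u. 1 \<le> u \<and> u < v}"
  unfolding PhiL_set_eq by (intro finite_imageI) simp

lemma phi_le_PhiL: "1 \<le> u \<Longrightarrow> u < v \<Longrightarrow> phi u v \<le> PhiL phi v"
  unfolding PhiL_def using PhiL_fin[of phi v] by (auto intro!: Max_ge)

lemma PhiL_ex: "2 \<le> v \<Longrightarrow> \<exists>u. 1 \<le> u \<and> u < v \<and> phi u v = PhiL phi v"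
proof -
  assume v: "2 \<le> v"
  have ne: "{phi u v | u. 1 \<le> u \<and> u < v} \<noteq> {}" using v by auto
  have "PhiL phi v \<in> {phi u v | u. 1 \<le> u \<and> u < v}"
    unfolding PhiL_def using v Max_in[OF PhiL_fin[of phi v] ne] by auto
  then show ?thesis by auto
qed

lemma PhiL_one: "PhiL phi 1 = 0" by (simp add: PhiL_def)

lemma lab_range: "monotone_labeling n k phi \<Longrightarrow> 1 \<le> u \<Longrightarrow> u < v \<Longrightarrow> v \<le> n \<Longrightarrow> 1 \<le> phi u v \<and> phi u v \<le> k"
  unfolding monotone_labeling_def is_labeling_def by auto

lemma mono_lab: "monotone_labeling n k phi \<Longrightarrow> 1 \<le> u \<Longrightarrow> u < v \<Longrightarrow> v < w \<Longrightarrow> w \<le> n \<Longrightarrow> phi u v \<le> phi v w"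
  unfolding monotone_labeling_def by blast

lemma PhiL_le_phi: "monotone_labeling n k phi \<Longrightarrow> 1 \<le> v \<Longrightarrow> v < y \<Longrightarrow> y \<le> n \<Longrightarrow> PhiL phi v \<le> phi v y"
proof -
  assume m: "monotone_labeling n k phi" and v: "1 \<le> v" "v < y" "y \<le> n"
  show ?thesis
  proof (cases "v = 1")
    case True then show ?thesis by (simp add: PhiL_def)
  next
    case False
    then obtain u where "1 \<le> u" "u < v" "phi u v = PhiL phi v" using PhiL_ex[of v phi] v by auto
    then show ?thesis using mono_lab[OF m, of u v y] v by auto
  qed
qed

lemma PhiL_mono: "monotone_labeling n k phi \<Longrightarrow> 1 \<le> v \<Longrightarrow> v \<le> y \<Longrightarrow> y \<le> n \<Longrightarrow> PhiL phi v \<le> PhiL phi y"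
  by (metis PhiL_le_phi le_less order.trans phi_le_PhiL)

lemma PhiL_pos: "monotone_labeling n k phi \<Longrightarrow> 2 \<le> v \<Longrightarrow> v \<le> n \<Longrightarrow> 1 \<le> PhiL phi v"
proof -
  assume m: "monotone_labeling n k phi" and v: "2 \<le> v" "v \<le> n"
  have "1 \<le> phi 1 v" using lab_range[OF m, of 1 v] v by auto
  also have "\<dots> \<le> PhiL phi v" using phi_le_PhiL[of 1 v phi] v by auto
  finally show ?thesis .
qed

definition bm :: "nat \<Rightarrow> (nat \<Rightarrow> nat \<Rightarrow> nat) \<Rightarrow> nat \<Rightarrow> (nat \<times> nat) set" where
  "bm n phi v = {(x,y). 1 \<le> x \<and> x < v \<and> v < y \<and> y \<le> n \<and> \<not> phi x v < phi v y}"

lemma bm_fin: "finite (bm n phi v)"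
  by (rule finite_subset[of _ "{1..n} \<times> {1..n}"]) (auto simp: bm_def)

lemma num_bad_decomp: "num_bad n phi = (\<Sum>v\<in>{1..n}. card (bm n phi v))"
proof -
  have eq: "bad_triples n phi = (\<Union>v\<in>{1..n}. (\<lambda>(x,y). (x,v,y)) ` bm n phi v)"
    by (auto simp: bad_triples_def bm_def image_iff)
  have "card (\<Union>v\<in>{1..n}. (\<lambda>(x,y). (x,v,y)) ` bm n phi v) = (\<Sum>v\<in>{1..n}. card ((\<lambda>(x,y). (x,v,y)) ` bm n phi v))"
    by (rule card_UN_disjoint) (auto simp: bm_fin)
  also have "\<dots> = (\<Sum>v\<in>{1..n}. card (bm n phi v))"
    by (rule sum.cong) (auto intro!: card_image inj_onI)
  finally show ?thesis unfolding num_bad_def eq .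
qed

lemma opt_compare:
  assumes opt: "\<And>psi. monotone_labeling n k psi \<Longrightarrow> num_bad n phi \<le> num_bad n psi"
    and m: "monotone_labeling n k psi"
    and h: "\<And>v. 1 \<le> v \<Longrightarrow> v \<le> n \<Longrightarrow> card (bm n psi v) + D v \<le> card (bm n phi v) + E v"
  shows "(\<Sum>v\<in>{1..n}. D v) \<le> (\<Sum>v\<in>{1..n}. E v)"
proof -
  have "(\<Sum>v\<in>{1..n}. card (bm n psi v) + D v) \<le> (\<Sum>v\<in>{1..n}. card (bm n phi v) + E v)"
    by (rule sum_mono) (use h in auto)
  then have "num_bad n psi + (\<Sum>v\<in>{1..n}. D v) \<le> num_bad n phi + (\<Sum>v\<in>{1..n}. E v)"
    by (simp add: num_bad_decomp sum.distrib)
  then show ?thesis using opt[OF m] by linarith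
qed


lemma bm_nonempty:
  assumes m: "monotone_labeling n k phi" and j: "1 \<le> j"
    and y: "y \<in> Xset n phi j" and z: "z \<in> Xset n phi j" and yz: "y < z"
  shows "bm n phi y \<noteq> {}"
proof -
  have y1: "1 \<le> y" "y \<le> n" "PhiL phi y = j" and z1: "1 \<le> z" "z \<le> n" "PhiL phi z = j"
    using y z by (auto simp: Xset_def)
  have "y \<noteq> 1" using y1 j by (auto simp: PhiL_def)
  then obtain x where x: "1 \<le> x" "x < y" "phi x y = j" using PhiL_ex[of y phi] y1 by auto
  have "PhiL phi y \<le> phi y z" using PhiL_le_phi[OF m y1(1) yz z1(2)] .
  moreover have "phi y z \<le> PhiL phi z" using phi_le_PhiL[of y z phi] y1 yz by auto
  ultimately have "phi y z = j" using y1 z1 by auto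
  then have "(x,z) \<in> bm n phi y" using x yz z1 by (auto simp: bm_def)
  then show ?thesis by auto
qed

lemma lower:
  assumes m: "monotone_labeling n k phi"
    and opt: "\<And>psi. monotone_labeling n k psi \<Longrightarrow> num_bad n phi \<le> num_bad n psi"
    and lam_le: "\<And>v. 1 \<le> v \<Longrightarrow> v \<le> n \<Longrightarrow> lam v \<le> PhiL phi v"
    and lam_pos: "\<And>v. 2 \<le> v \<Longrightarrow> v \<le> n \<Longrightarrow> 1 \<le> lam v"
    and lam_mono: "\<And>v y. 1 \<le> v \<Longrightarrow> v < y \<Longrightarrow> y \<le> n \<Longrightarrow> lam v \<le> lam y"
    and lam_gap: "\<And>v y. 1 \<le> v \<Longrightarrow> v < y \<Longrightarrow> y \<le> n \<Longrightarrow> lam y < PhiL phi y \<Longrightarrow> lam v < lam y"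
    and z: "1 \<le> z" "z \<le> n" "lam z < PhiL phi z"
  shows "bm n phi z = {}"
proof -
  define psi where "psi = (\<lambda>x v. min (phi x v) (lam v))"
  have mpsi: "monotone_labeling n k psi"
    unfolding monotone_labeling_def is_labeling_def
  proof (intro conjI allI impI)
    fix u v assume a: "1 \<le> u \<and> u < v \<and> v \<le> n"
    then have "1 \<le> phi u v \<and> phi u v \<le> k" using lab_range[OF m] by auto
    moreover have "1 \<le> lam v" using lam_pos a by auto
    ultimately show "psi u v \<in> {1..k}" by (auto simp: psi_def)
  next
    fix u v w assume a: "1 \<le> u \<and> u < v \<and> v < w \<and> w \<le> n"
    then have "phi u v \<le> phi v w" using mono_lab[OF m] by auto
    moreover have "lam v \<le> lam w" using lam_mono a by auto
    ultimately show "psi u v \<le> psi v w" by (auto simp: psi_def)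
  qed
  have h: "card (bm n psi v) + (if lam v < PhiL phi v then card (bm n phi v) else 0) \<le> card (bm n phi v) + 0"
    if v: "1 \<le> v" "v \<le> n" for v
  proof (cases "lam v < PhiL phi v")
    case True
    have "bm n psi v = {}"
    proof (rule ccontr)
      assume "bm n psi v \<noteq> {}"
      then obtain x y where xy: "1 \<le> x" "x < v" "v < y" "y \<le> n" "\<not> psi x v < psi v y"
        by (auto simp: bm_def)
      have "PhiL phi v \<le> phi v y" using PhiL_le_phi[OF m v(1) xy(3) xy(4)] .
      moreover have "lam v < lam y"
      proof (cases "lam y < PhiL phi y")
        case True then show ?thesis using lam_gap[of v y] v xy by auto
      next
        case False
        then have "lam y = PhiL phi y" using lam_le[of y] xy v by auto
        moreover have "PhiL phi v \<le> PhiL phi y" using PhiL_mono[OF m v(1), of y] xy by auto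
        ultimately show ?thesis using True by auto
      qed
      ultimately show False using xy(5) True by (auto simp: psi_def)
    qed
    then show ?thesis using True by simp
  next
    case False
    then have lv: "lam v = PhiL phi v" using lam_le[OF v] by auto
    have "bm n psi v \<subseteq> bm n phi v"
    proof
      fix p assume "p \<in> bm n psi v"
      then obtain x y where p: "p = (x,y)" and xy: "1 \<le> x" "x < v" "v < y" "y \<le> n" "\<not> psi x v < psi v y"
        by (auto simp: bm_def)
      have pxv: "phi x v \<le> PhiL phi v" using phi_le_PhiL[of x v phi] xy by auto
      then have psxv: "psi x v = phi x v" using lv by (auto simp: psi_def)
      have "\<not> phi x v < phi v y"
      proof (cases "phi v y \<le> lam y")
        case True then show ?thesis using xy(5) psxv by (auto simp: psi_def)
      next
        case False
        have "phi v y \<le> PhiL phi y" using phi_le_PhiL[of v y phi] xy v by auto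
        then have "lam y < PhiL phi y" using False by auto
        then have "lam v < lam y" using lam_gap[of v y] v xy by auto
        then have "phi x v < lam y" using pxv lv by auto
        moreover have "psi v y = lam y" using False by (auto simp: psi_def)
        ultimately show ?thesis using xy(5) psxv by auto
      qed
      then show "p \<in> bm n phi v" using p xy by (auto simp: bm_def)
    qed
    then have "card (bm n psi v) \<le> card (bm n phi v)" by (rule card_mono[OF bm_fin])
    then show ?thesis using False by simp
  qed
  have "(\<Sum>v\<in>{1..n}. (if lam v < PhiL phi v then card (bm n phi v) else 0)) \<le> (\<Sum>v\<in>{1..n}. (0::nat))"
    by (rule opt_compare[OF opt mpsi]) (use h in auto)
  then have "(\<Sum>v\<in>{1..n}. (if lam v < PhiL phi v then card (bm n phi v) else 0)) = 0" by simp
  then have "\<forall>a\<in>{1..n}. (if lam a < PhiL phi a then card (bm n phi a) else 0) = 0"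
    by simp
  then have "(if lam z < PhiL phi z then card (bm n phi z) else 0) = 0"
    using z(1,2) by (metis atLeastAtMost_iff)
  then show ?thesis using z bm_fin[of n phi z] by simp
qed

lemma Xset_D: "v \<in> Xset n phi j \<Longrightarrow> 1 \<le> v \<and> v \<le> n \<and> PhiL phi v = j"
  by (auto simp: Xset_def)

lemma single:
  assumes m: "monotone_labeling n k phi"
    and opt: "\<And>psi. monotone_labeling n k psi \<Longrightarrow> num_bad n phi \<le> num_bad n psi"
    and j: "2 \<le> j" and w: "w \<in> Xset n phi j"
    and below: "\<And>v. 1 \<le> v \<Longrightarrow> v < w \<Longrightarrow> PhiL phi v + 2 \<le> j"
    and z: "z \<in> Xset n phi j"
  shows "z \<le> w"
proof (rule ccontr)
  assume "\<not> z \<le> w"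
  then have wz: "w < z" by simp
  have w1: "1 \<le> w" "w \<le> n" "PhiL phi w = j" using Xset_D[OF w] by auto
  have z1: "1 \<le> z" "z \<le> n" "PhiL phi z = j" using Xset_D[OF z] by auto
  define lam where "lam = (\<lambda>v. if v = w then j - 1 else PhiL phi v)"
  have "bm n phi w = {}"
  proof (rule lower[OF m opt, of lam])
    fix v assume "1 \<le> v" "v \<le> n" then show "lam v \<le> PhiL phi v" using w1 by (auto simp: lam_def)
  next
    fix v assume "2 \<le> v" "v \<le> n" then show "1 \<le> lam v" using j PhiL_pos[OF m] by (auto simp: lam_def)
  next
    fix v y assume a: "1 \<le> v" "v < y" "y \<le> n"
    show "lam v \<le> lam y"
    proof (cases "v = w")
      case True then show ?thesis using a w1 PhiL_mono[OF m, of w y] by (auto simp: lam_def)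
    next
      case False
      show ?thesis
      proof (cases "y = w")
        case True then show ?thesis using a below[of v] False by (auto simp: lam_def)
      next
        case False2: False
        then show ?thesis using False a PhiL_mono[OF m, of v y] by (auto simp: lam_def)
      qed
    qed
  next
    fix v y assume a: "1 \<le> v" "v < y" "y \<le> n" "lam y < PhiL phi y"
    then have "y = w" by (auto simp: lam_def split: if_splits)
    then show "lam v < lam y" using a below[of v] j by (auto simp: lam_def)
  next
    show "1 \<le> w" "w \<le> n" "lam w < PhiL phi w" using w1 j by (auto simp: lam_def)
  qed
  moreover have "bm n phi w \<noteq> {}" using bm_nonempty[OF m _ w z wz] j by auto
  ultimately show False by simp
qed

lemma pair:
  assumes m: "monotone_labeling n k phi"
    and opt: "\<And>psi. monotone_labeling n k psi \<Longrightarrow> num_bad n phi \<le> num_bad n psi"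
    and j: "2 \<le> j" and w: "w \<in> Xset n phi j" and y: "y \<in> Xset n phi (Suc j)" and wy: "w < y"
    and below: "\<And>v. 1 \<le> v \<Longrightarrow> v < y \<Longrightarrow> v \<noteq> w \<Longrightarrow> PhiL phi v + 3 \<le> j"
    and z: "z \<in> Xset n phi (Suc j)"
  shows "z \<le> y"
proof (rule ccontr)
  assume "\<not> z \<le> y"
  then have yz: "y < z" by simp
  have w1: "1 \<le> w" "w \<le> n" "PhiL phi w = j" using Xset_D[OF w] by auto
  have y1: "1 \<le> y" "y \<le> n" "PhiL phi y = Suc j" using Xset_D[OF y] by auto
  define lam where "lam = (\<lambda>v. if v = w then j - 1 else if v = y then j else PhiL phi v)"
  have "bm n phi y = {}"
  proof (rule lower[OF m opt, of lam])
    fix v assume "1 \<le> v" "v \<le> n" then show "lam v \<le> PhiL phi v" using w1 y1 by (auto simp: lam_def)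
  next
    fix v assume "2 \<le> v" "v \<le> n" then show "1 \<le> lam v" using j PhiL_pos[OF m] by (auto simp: lam_def)
  next
    fix v u assume a: "1 \<le> v" "v < u" "u \<le> n"
    have pm: "PhiL phi v \<le> PhiL phi u" using PhiL_mono[OF m, of v u] a by auto
    show "lam v \<le> lam u"
    proof (cases "v = w")
      case True
      show ?thesis
      proof (cases "u = y")
        case True then show ?thesis using \<open>v = w\<close> wy by (auto simp: lam_def)
      next
        case False
        have "\<not> u < y"
        proof
          assume "u < y" then have "PhiL phi u + 3 \<le> j" using below[of u] a True by auto
          then show False using pm True w1 by auto
        qed
        then have "y < u" using False by auto
        then have "PhiL phi y \<le> PhiL phi u" using PhiL_mono[OF m y1(1), of u] a by auto
        then show ?thesis using True False a y1 by (auto simp: lam_def)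
      qed
    next
      case False
      show ?thesis
      proof (cases "v = y")
        case True
        then have "PhiL phi y \<le> PhiL phi u" using pm by simp
        then show ?thesis using True a wy y1 by (auto simp: lam_def)
      next
        case False2: False
        show ?thesis
        proof (cases "v < y")
          case True
          then have "PhiL phi v + 3 \<le> j" using below[of v] a False by auto
          then show ?thesis using False False2 pm by (auto simp: lam_def)
        next
          case False3: False
          then show ?thesis using False False2 pm a wy by (auto simp: lam_def)
        qed
      qed
    qed
  next
    fix v u assume a: "1 \<le> v" "v < u" "u \<le> n" "lam u < PhiL phi u"
    then have "u = w \<or> u = y" by (auto simp: lam_def split: if_splits)
    then show "lam v < lam u"
    proof
      assume "u = w"
      then have "PhiL phi v + 3 \<le> j" using below[of v] a wy by auto
      then show ?thesis using \<open>u = w\<close> a wy by (auto simp: lam_def)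
    next
      assume "u = y"
      show ?thesis
      proof (cases "v = w")
        case True then show ?thesis using \<open>u = y\<close> wy j by (auto simp: lam_def)
      next
        case False
        then have "PhiL phi v + 3 \<le> j" using below[of v] a \<open>u = y\<close> by auto
        then show ?thesis using \<open>u = y\<close> False a by (auto simp: lam_def)
      qed
    qed
  next
    show "1 \<le> y" "y \<le> n" "lam y < PhiL phi y" using y1 wy by (auto simp: lam_def)
  qed
  moreover have "bm n phi y \<noteq> {}" using bm_nonempty[OF m _ y z yz] by auto
  ultimately show False by simp
qed

lemma sum_distinct_bound:
  fixes U :: "nat set"
  shows "finite U \<Longrightarrow> U \<subseteq> {..N} \<Longrightarrow> \<Sum>U \<le> (\<Sum>j<card U. N - j)"
proof (induction "card U" arbitrary: U N)
  case 0 then show ?case by simp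
next
  case (Suc c)
  then have ne: "U \<noteq> {}" by auto
  define mx where "mx = Max U"
  have mxU: "mx \<in> U" using Max_in[OF Suc.prems(1) ne] mx_def by simp
  define U0 where "U0 = U - {mx}"
  have cU0: "c = card U0" using Suc.hyps(2) mxU Suc.prems(1) by (simp add: U0_def)
  have fU0: "finite U0" using Suc.prems(1) by (simp add: U0_def)
  have sub: "U0 \<subseteq> {..mx - 1}"
  proof
    fix x assume "x \<in> U0"
    then have "x \<in> U" "x \<noteq> mx" by (auto simp: U0_def)
    then have "x < mx" using Max_ge[OF Suc.prems(1)] mx_def by (metis le_neq_implies_less)
    then show "x \<in> {..mx - 1}" by simp
  qed
  have IH: "\<Sum>U0 \<le> (\<Sum>j<c. (mx - 1) - j)" using Suc.hyps(1)[OF cU0 fU0 sub] cU0 by simp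
  have mxN: "mx \<le> N" using mxU Suc.prems(2) by auto
  have "(\<Sum>j<c. (mx - 1) - j) \<le> (\<Sum>j<c. N - Suc j)"
    by (rule sum_mono) (use mxN in auto)
  have "\<Sum>U = mx + \<Sum>U0" using Suc.prems(1) mxU by (simp add: U0_def sum.remove)
  also have "\<dots> \<le> N + (\<Sum>j<c. N - Suc j)"
    using IH mxN \<open>(\<Sum>j<c. (mx - 1) - j) \<le> (\<Sum>j<c. N - Suc j)\<close> by linarith
  also have "\<dots> = (\<Sum>j<Suc c. N - j)" by (simp only: sum.lessThan_Suc_shift diff_zero)
  finally show ?case using Suc.hyps(2) by simp
qed

lemma sum_min_Suc: "(\<Sum>j<r. min (Suc q) j) = (\<Sum>j<r. min q (j::nat)) + (r - Suc q)"
  by (induction r) auto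

lemma arith_H:
  fixes s r M0 q :: nat
  assumes "M0 + 4 \<le> s + r"
  shows "q \<le> M0 + 1 \<Longrightarrow> (\<Sum>j<q. M0 - j) + q \<le> q * (s - 1) + (\<Sum>j<r. min q j)"
proof (induction q)
  case 0 then show ?case by simp
next
  case (Suc q)
  then have IH: "(\<Sum>j<q. M0 - j) + q \<le> q * (s - 1) + (\<Sum>j<r. min q j)" by simp
  have step: "M0 - q + 1 \<le> (s - 1) + (r - Suc q)" using assms Suc.prems by linarith
  have "(\<Sum>j<Suc q. M0 - j) + Suc q = ((\<Sum>j<q. M0 - j) + q) + (M0 - q + 1)" by simp
  also have "\<dots> \<le> (q * (s - 1) + (\<Sum>j<r. min q j)) + ((s - 1) + (r - Suc q))"
    using IH step by linarith
  also have "\<dots> = Suc q * (s - 1) + (\<Sum>j<r. min (Suc q) j)" by (simp add: sum_min_Suc)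
  finally show ?case .
qed

lemma arith_final:
  fixes s r M0 m p :: nat
  assumes "M0 + 4 \<le> s + r" "m \<le> p" "1 \<le> p" "m \<le> M0 + 1"
  shows "(\<Sum>j<m. M0 - j) < p * (s - 1) + (\<Sum>j<r. min p j)"
proof -
  define m' where "m' = max m 1"
  have m'1: "1 \<le> m'" "m \<le> m'" "m' \<le> p" "m' \<le> M0 + 1" using assms by (auto simp: m'_def)
  have "(\<Sum>j<m. M0 - j) \<le> (\<Sum>j<m'. M0 - j)" by (rule sum_mono2) (use m'1 in auto)
  also have "\<dots> < (\<Sum>j<m'. M0 - j) + m'" using m'1 by simp
  also have "\<dots> \<le> m' * (s - 1) + (\<Sum>j<r. min m' j)" using arith_H[OF assms(1) m'1(4)] .
  also have "\<dots> \<le> p * (s - 1) + (\<Sum>j<r. min p j)"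
    using m'1 by (intro add_mono mult_le_mono1 sum_mono) auto
  finally show ?thesis .
qed

lemma sum_reindex_rev: "(\<Sum>y\<in>{lo..hi::nat}. f (hi - y)) = (\<Sum>j<Suc hi - lo. f j)"
  by (rule sum.reindex_bij_witness[of _ "\<lambda>j. hi - j" "\<lambda>y. hi - y"]) auto

lemma between:
  assumes m: "monotone_labeling n k phi" and "1 \<le> x" "x < v" "v \<le> n"
  shows "PhiL phi x \<le> phi x v \<and> phi x v \<le> PhiL phi v"
  using PhiL_le_phi[OF m, of x v] phi_le_PhiL[of x v phi] assms by auto

lemma main_move:
  assumes m: "monotone_labeling n k phi"
    and opt: "\<And>psi. monotone_labeling n k psi \<Longrightarrow> num_bad n phi \<le> num_bad n psi"
    and i: "2 \<le> i" and w: "w \<in> Xset n phi i"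
    and wmin: "\<And>v. 1 \<le> v \<Longrightarrow> v < w \<Longrightarrow> PhiL phi v < i"
    and a0: "\<And>x. 1 \<le> x \<Longrightarrow> x < w \<Longrightarrow> i \<le> PhiL phi x + 2 \<Longrightarrow> a0 \<le> x"
    and hi: "\<And>v y. v \<in> Xset n phi (Suc i) \<Longrightarrow> v < y \<Longrightarrow> y \<le> hi \<Longrightarrow> y \<in> Xset n phi (Suc i)"
  shows "card (bm n phi w) + (\<Sum>v\<in>Xset n phi (Suc i). if phi w v = Suc i then hi - v else 0)
           \<le> (\<Sum>u\<in>{u \<in> Xset n phi (i - 1). phi u w = i}. u - a0)"
proof -
  let ?L = "PhiL phi"
  define U where "U = {u \<in> Xset n phi (i - 1). phi u w = i}"
  define X1 where "X1 = Xset n phi (Suc i)"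
  have w1: "1 \<le> w" "w \<le> n" "?L w = i" using Xset_D[OF w] by auto
  define psi where "psi = (\<lambda>x v. if v = w then min (phi x v) (i - 1)
             else if x = w then min (phi x v) i
             else if ?L v = i - 1 \<and> ?L x + 3 \<le> i then min (phi x v) (i - 2)
             else phi x v)"
  have psi_le: "psi x v \<le> phi x v" for x v by (auto simp: psi_def)
  have mpsi: "monotone_labeling n k psi"
    unfolding monotone_labeling_def is_labeling_def
  proof (intro conjI allI impI)
    fix x v assume a: "1 \<le> x \<and> x < v \<and> v \<le> n"
    then have "1 \<le> phi x v \<and> phi x v \<le> k" using lab_range[OF m] by auto
    then show "psi x v \<in> {1..k}" using i psi_le[of x v] by (auto simp: psi_def)
  next
    fix x v y assume a: "1 \<le> x \<and> x < v \<and> v < y \<and> y \<le> n"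
    have pxv: "phi x v \<le> phi v y" using mono_lab[OF m] a by auto
    have bxv: "phi x v \<le> ?L v" using between[OF m, of x v] a by auto
    have bvy: "?L v \<le> phi v y" using between[OF m, of v y] a by auto
    show "psi x v \<le> psi v y"
    proof (cases "y = w")
      case True
      then have "?L v < i" using wmin[of v] a by auto
      then show ?thesis using True psi_le[of x v] pxv bxv a by (auto simp: psi_def)
    next
      case yw: False
      show ?thesis
      proof (cases "v = w")
        case True
        then show ?thesis using yw pxv a by (auto simp: psi_def)
      next
        case vw: False
        show ?thesis
        proof (cases "?L y = i - 1 \<and> ?L v + 3 \<le> i")
          case True
          then show ?thesis using yw vw psi_le[of x v] pxv bxv a by (auto simp: psi_def)
        next
          case False
          then show ?thesis using yw vw psi_le[of x v] pxv a by (auto simp: psi_def)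
        qed
      qed
    qed
  qed
  define D where "D v = (if v = w then card (bm n phi w) else 0)
       + (if v \<in> X1 then (if phi w v = Suc i then hi - v else 0) else 0)" for v
  define E where "E v = (if v \<in> U then v - a0 else 0)" for v
  have wlt: "v < w" if "1 \<le> v" "v \<le> n" "?L v < i" for v
  proof (rule ccontr)
    assume "\<not> v < w" then have "?L w \<le> ?L v" using PhiL_mono[OF m w1(1), of v] that by auto
    then show False using that w1 by auto
  qed
  have wgt: "w < v" if "1 \<le> v" "v \<le> n" "i < ?L v" for v
  proof (rule ccontr)
    assume "\<not> w < v" then have "?L v \<le> ?L w" using PhiL_mono[OF m that(1), of w] w1 by auto
    then show False using that w1 by auto
  qed
  have gensub: "bm n psi v \<subseteq> bm n phi v" if v: "1 \<le> v" "v \<le> n" "v \<noteq> w" "?L v \<noteq> i - 1" for v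
  proof
    fix p assume "p \<in> bm n psi v"
    then obtain x y where p: "p = (x,y)" and xy: "1 \<le> x" "x < v" "v < y" "y \<le> n" "\<not> psi x v < psi v y"
      by (auto simp: bm_def)
    have pxv: "psi x v \<le> ?L v" using psi_le[of x v] between[OF m, of x v] xy v by auto
    have "\<not> phi x v < phi v y"
    proof (cases "y = w")
      case True
      then have "?L v < i" using wmin[of v] xy v by auto
      then have Lv: "?L v + 2 \<le> i" using v(4) by auto
      show ?thesis
      proof (cases "phi v w \<le> i - 1")
        case True
        then have "psi v y = phi v y" using \<open>y = w\<close> by (simp add: psi_def)
        then show ?thesis using xy(5) psi_le[of x v] by auto
      next
        case False
        then have "psi v y = i - 1" using \<open>y = w\<close> by (simp add: psi_def)
        then show ?thesis using xy(5) pxv Lv by auto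
      qed
    next
      case yw: False
      show ?thesis
      proof (cases "?L y = i - 1 \<and> ?L v + 3 \<le> i \<and> \<not> phi v y \<le> i - 2")
        case True
        then have "psi v y = i - 2" using yw v by (simp add: psi_def)
        then show ?thesis using xy(5) pxv True by auto
      next
        case False
        then have "psi v y = phi v y" using yw v by (auto simp: psi_def)
        then show ?thesis using xy(5) psi_le[of x v] by auto
      qed
    qed
    then show "p \<in> bm n phi v" using p xy by (auto simp: bm_def)
  qed
  have h: "card (bm n psi v) + D v \<le> card (bm n phi v) + E v" if v: "1 \<le> v" "v \<le> n" for v
  proof -
    consider (W) "v = w" | (X) "v \<noteq> w" "?L v = Suc i" | (Y) "v \<noteq> w" "?L v = i - 1"
      | (O) "v \<noteq> w" "?L v \<noteq> Suc i" "?L v \<noteq> i - 1" by blast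
    then show ?thesis
    proof cases
      case W
      have "bm n psi w = {}"
      proof (rule ccontr)
        assume "bm n psi w \<noteq> {}"
        then obtain x y where xy: "1 \<le> x" "x < w" "w < y" "y \<le> n" "\<not> psi x w < psi w y"
          by (auto simp: bm_def)
        have "psi x w \<le> i - 1" by (simp add: psi_def)
        moreover have "i \<le> phi w y" using between[OF m, of w y] xy w1 by auto
        then have "psi w y = i" using xy by (auto simp: psi_def)
        ultimately show False using xy(5) i by auto
      qed
      moreover have "w \<notin> U" "w \<notin> X1" using w1 i by (auto simp: U_def X1_def Xset_def)
      ultimately show ?thesis using W by (simp add: D_def E_def)
    next
      case O
      then have "card (bm n psi v) \<le> card (bm n phi v)"
        using gensub[OF v] by (intro card_mono[OF bm_fin]) auto
      moreover have "v \<notin> U" "v \<notin> X1" using O by (auto simp: U_def X1_def Xset_def)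
      ultimately show ?thesis using O by (simp add: D_def E_def)
    next
      case X
      have vX: "v \<in> X1" using X v by (auto simp: X1_def Xset_def)
      have wv: "w < v" using wgt[OF v] X by auto
      define Ex where "Ex = (if phi w v = Suc i then {w} \<times> {v<..hi} else {})"
      have cEx: "card Ex = (if phi w v = Suc i then hi - v else 0)"
        by (simp add: Ex_def card_cartesian_product)
      have sub1: "Ex \<subseteq> bm n phi v"
      proof
        fix p assume "p \<in> Ex"
        then obtain y where p: "p = (w,y)" "v < y" "y \<le> hi" and pw: "phi w v = Suc i"
          by (auto simp: Ex_def split: if_splits)
        have yX: "y \<in> X1" using hi[of v y] vX p by (auto simp: X1_def)
        then have y1: "y \<le> n" "?L y = Suc i" by (auto simp: X1_def Xset_def)
        have "phi v y = Suc i" using between[OF m, of v y] v p y1 X by auto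
        then show "p \<in> bm n phi v" using p pw w1 wv y1 by (auto simp: bm_def)
      qed
      have disj: "bm n psi v \<inter> Ex = {}"
      proof (rule ccontr)
        assume "bm n psi v \<inter> Ex \<noteq> {}"
        then obtain y where p: "(w,y) \<in> bm n psi v" "v < y" "y \<le> hi" and pw: "phi w v = Suc i"
          by (auto simp: Ex_def split: if_splits)
        have yX: "y \<in> X1" using hi[of v y] vX p by (auto simp: X1_def)
        then have y1: "y \<le> n" "?L y = Suc i" by (auto simp: X1_def Xset_def)
        have "phi v y = Suc i" using between[OF m, of v y] v p y1 X by auto
        moreover have "y \<noteq> w" using wv p by auto
        ultimately have "psi v y = Suc i" using X i by (auto simp: psi_def)
        moreover have "psi w v = i" using pw X by (auto simp: psi_def)
        ultimately show False using p(1) by (auto simp: bm_def)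
      qed
      have "card (bm n psi v) + card Ex = card (bm n psi v \<union> Ex)"
        using disj by (simp add: card_Un_disjoint bm_fin Ex_def)
      also have "\<dots> \<le> card (bm n phi v)"
        using gensub[OF v] X sub1 i by (intro card_mono[OF bm_fin]) auto
      finally have "card (bm n psi v) + card Ex \<le> card (bm n phi v)" .
      moreover have "v \<notin> U" using X i by (auto simp: U_def Xset_def)
      ultimately show ?thesis using X vX cEx by (simp add: D_def E_def)
    next
      case Y
      have vw: "v < w" using wlt[OF v] Y i by auto
      define Ex where "Ex = (if v \<in> U then {a0..<v} \<times> {w} else {})"
      have cEx: "card Ex = (if v \<in> U then v - a0 else 0)"
        by (simp add: Ex_def card_cartesian_product)
      have sub: "bm n psi v \<subseteq> bm n phi v \<union> Ex"
      proof
        fix p assume "p \<in> bm n psi v"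
        then obtain x y where p: "p = (x,y)" and xy: "1 \<le> x" "x < v" "v < y" "y \<le> n" "\<not> psi x v < psi v y"
          by (auto simp: bm_def)
        have xw: "x \<noteq> w" using xy vw by auto
        show "p \<in> bm n phi v \<union> Ex"
        proof (cases "y = w")
          case False
          have "\<not> ?L v + 3 \<le> i" using Y i by auto
          then have "psi v y = phi v y" using False Y by (simp add: psi_def)
          then have "\<not> phi x v < phi v y" using xy(5) psi_le[of x v] by auto
          then show ?thesis using p xy by (auto simp: bm_def)
        next
          case True
          have "i - 1 \<le> phi v w" using between[OF m, of v w] v vw w1 Y by auto
          then have "psi v y = i - 1" using True by (simp add: psi_def)
          then have ge: "i - 1 \<le> psi x v" using xy(5) by auto
          have nl: "\<not> ?L x + 3 \<le> i"
          proof
            assume "?L x + 3 \<le> i"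
            then have "psi x v \<le> i - 2" using xw Y Y(1) by (simp add: psi_def)
            then show False using ge i \<open>?L x + 3 \<le> i\<close> by auto
          qed
          then have "psi x v = phi x v" using xw Y by (simp add: psi_def)
          then have ge2: "i - 1 \<le> phi x v" using ge by simp
          have "a0 \<le> x" using a0[of x] xy vw nl by auto
          show ?thesis
          proof (cases "v \<in> U")
            case True
            then show ?thesis using p \<open>a0 \<le> x\<close> xy \<open>y = w\<close> by (auto simp: Ex_def)
          next
            case False
            then have "phi v w \<noteq> i" using Y v by (auto simp: U_def Xset_def)
            moreover have "phi v w \<le> i" using between[OF m, of v w] v vw w1 by auto
            ultimately have "phi v w \<le> i - 1" by auto
            then have "\<not> phi x v < phi v y" using ge2 True by auto
            then show ?thesis using p xy by (auto simp: bm_def)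
          qed
        qed
      qed
      have "card (bm n psi v) \<le> card (bm n phi v \<union> Ex)"
        by (rule card_mono[OF _ sub]) (simp add: bm_fin Ex_def)
      also have "\<dots> \<le> card (bm n phi v) + card Ex" by (rule card_Un_le)
      finally have "card (bm n psi v) \<le> card (bm n phi v) + card Ex" .
      moreover have "v \<notin> X1" using Y i by (auto simp: X1_def Xset_def)
      ultimately show ?thesis using Y cEx by (simp add: D_def E_def)
    qed
  qed
  have "(\<Sum>v\<in>{1..n}. D v) \<le> (\<Sum>v\<in>{1..n}. E v)"
    by (rule opt_compare[OF opt mpsi h])
  moreover have "(\<Sum>v\<in>{1..n}. D v) = card (bm n phi w) + (\<Sum>v\<in>X1. if phi w v = Suc i then hi - v else 0)"
  proof -
    have "X1 \<subseteq> {1..n}" by (auto simp: X1_def Xset_def)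
    then have "{1..n} \<inter> X1 = X1" by auto
    moreover have "(\<Sum>v\<in>{1..n}. (if v \<in> X1 then (if phi w v = Suc i then hi - v else 0) else 0))
        = (\<Sum>v\<in>{1..n} \<inter> X1. (if phi w v = Suc i then hi - v else 0))"
      by (rule sum.inter_restrict[symmetric]) simp
    moreover have "(\<Sum>v\<in>{1..n}. (if v = w then card (bm n phi w) else 0)) = card (bm n phi w)"
      using w1 by (simp add: sum.delta)
    ultimately show ?thesis unfolding D_def sum.distrib by simp
  qed
  moreover have "(\<Sum>v\<in>{1..n}. E v) = (\<Sum>u\<in>U. u - a0)"
  proof -
    have "U \<subseteq> {1..n}" by (auto simp: U_def Xset_def)
    then have "{1..n} \<inter> U = U" by auto
    then show ?thesis unfolding E_def by (simp add: sum.inter_restrict[symmetric])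
  qed
  ultimately show ?thesis by (simp add: U_def X1_def)
qed

theorem lemma4p9:
  fixes n k :: nat and phi :: "nat \<Rightarrow> nat \<Rightarrow> nat" and i :: nat
  assumes "k \<ge> 2"
    and "monotone_labeling n k phi"
    and "\<And>psi. monotone_labeling n k psi \<Longrightarrow> num_bad n phi \<le> num_bad n psi"
    and "2 \<le> i" and "i \<le> k"
  shows "card (Xset n phi i) + card (Xset n phi (i + 1))
           \<le> card (Xset n phi (i - 2)) + card (Xset n phi (i - 1)) + 2"
proof -
  note m = assms(2) and opt = assms(3) and i = assms(4)
  let ?L = "PhiL phi"
  define Xa where "Xa = Xset n phi (i - 2)"
  define Xb where "Xb = Xset n phi (i - 1)"
  define Xi where "Xi = Xset n phi i"
  define Xj where "Xj = Xset n phi (Suc i)"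
  have finX: "finite (Xset n phi j)" for j
    by (rule finite_subset[of _ "{1..n}"]) (auto simp: Xset_def)
  have XD: "v \<in> Xset n phi j \<longleftrightarrow> 1 \<le> v \<and> v \<le> n \<and> ?L v = j" for v j by (simp add: Xset_def)
  show ?thesis
  proof (rule ccontr)
    assume "\<not> ?thesis"
    then have neg: "card Xa + card Xb + 2 < card Xi + card Xj"
      by (simp add: Xa_def Xb_def Xi_def Xj_def)
    show False
    proof (cases "Xi = {}")
      case True
      then have "Xj \<noteq> {}" using neg by auto
      define y where "y = Min Xj"
      have yX: "y \<in> Xj" using Min_in[OF finX \<open>Xj \<noteq> {}\<close>[unfolded Xj_def]] by (simp add: y_def Xj_def)
      have y1: "1 \<le> y" "y \<le> n" "?L y = Suc i" using yX by (auto simp: Xj_def XD)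
      have "z \<le> y" if z: "z \<in> Xj" for z
      proof (rule single[OF m opt _ yX[unfolded Xj_def] _ z[unfolded Xj_def]])
        show "2 \<le> Suc i" using i by simp
      next
        fix v assume v: "1 \<le> v" "v < y"
        have "?L v \<le> Suc i" using PhiL_mono[OF m v(1), of y] v y1 by auto
        moreover have "?L v \<noteq> Suc i"
        proof
          assume "?L v = Suc i" then have "v \<in> Xj" using v y1 by (auto simp: Xj_def XD)
          then show False using Min_le[OF finX, of v "Suc i"] v y_def by (auto simp: Xj_def)
        qed
        moreover have "?L v \<noteq> i"
        proof
          assume "?L v = i" then have "v \<in> Xi" using v y1 by (auto simp: Xi_def XD)
          then show False using True by auto
        qed
        ultimately show "?L v + 2 \<le> Suc i" by auto
      qed
      then have "Xj \<subseteq> {y}" using Min_le[OF finX] y_def by (fastforce simp: Xj_def)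
      then have "card Xj \<le> 1" using card_mono[of "{y}" Xj] by auto
      then show False using neg True by auto
    next
      case False
      define w where "w = Min Xi"
      have wX: "w \<in> Xi" using Min_in[OF finX False[unfolded Xi_def]] by (simp add: w_def Xi_def)
      have w1: "1 \<le> w" "w \<le> n" "?L w = i" using wX by (auto simp: Xi_def XD)
      have wmin: "?L v < i" if v: "1 \<le> v" "v < w" for v
      proof -
        have "?L v \<le> i" using PhiL_mono[OF m v(1), of w] v w1 by auto
        moreover have "?L v \<noteq> i"
        proof
          assume "?L v = i" then have "v \<in> Xi" using v w1 by (auto simp: Xi_def XD)
          then show False using Min_le[OF finX, of v i] v w_def by (auto simp: Xi_def)
        qed
        ultimately show ?thesis by auto
      qed
      have wgt: "w < v" if "1 \<le> v" "v \<le> n" "i < ?L v" for v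
      proof (rule ccontr)
        assume "\<not> w < v" then have "?L v \<le> ?L w" using PhiL_mono[OF m that(1), of w] w1 by auto
        then show False using that w1 by auto
      qed
      show False
      proof (cases "Xa \<union> Xb = {}")
        case True
        have "i \<noteq> 2"
        proof
          assume "i = 2"
          then have "1 \<in> Xa" using w1 by (auto simp: Xa_def XD PhiL_def)
          then show False using True by auto
        qed
        have below: "?L v + 3 \<le> i" if v: "1 \<le> v" "v < w" for v
        proof -
          have "?L v < i" using wmin[OF v] .
          moreover have "v \<le> n" using v w1 by auto
          then have "v \<notin> Xa" "v \<notin> Xb" using True by auto
          then have "?L v \<noteq> i - 2" "?L v \<noteq> i - 1" using v w1 by (auto simp: Xa_def Xb_def XD)
          ultimately show ?thesis by auto
        qed
        have Xi1: "Xi \<subseteq> {w}"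
        proof
          fix z assume z: "z \<in> Xi"
          have "z \<le> w"
          proof (rule single[OF m opt i wX[unfolded Xi_def] _ z[unfolded Xi_def]])
            fix v assume "1 \<le> v" "v < w" then show "?L v + 2 \<le> i" using below[of v] by auto
          qed
          moreover have "w \<le> z" using Min_le[OF finX, of z i] z w_def by (auto simp: Xi_def)
          ultimately show "z \<in> {w}" by auto
        qed
        then have "card Xi \<le> 1" using card_mono[of "{w}" Xi] by auto
        then have "Xj \<noteq> {}" using neg by auto
        define y where "y = Min Xj"
        have yX: "y \<in> Xj" using Min_in[OF finX \<open>Xj \<noteq> {}\<close>[unfolded Xj_def]] by (simp add: y_def Xj_def)
        have y1: "1 \<le> y" "y \<le> n" "?L y = Suc i" using yX by (auto simp: Xj_def XD)
        have wy: "w < y" using wgt[OF y1(1,2)] y1 by auto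
        have "z \<le> y" if z: "z \<in> Xj" for z
        proof (rule pair[OF m opt i wX[unfolded Xi_def] yX[unfolded Xj_def] wy _ z[unfolded Xj_def]])
          fix v assume v: "1 \<le> v" "v < y" "v \<noteq> w"
          show "?L v + 3 \<le> i"
          proof (cases "v < w")
            case True then show ?thesis using below v by auto
          next
            case False
            then have wv: "w < v" using v by auto
            have "?L w \<le> ?L v" "?L v \<le> ?L y" using PhiL_mono[OF m, of w v] PhiL_mono[OF m, of v y] v wv w1 y1 by auto
            moreover have "?L v \<noteq> Suc i"
            proof
              assume "?L v = Suc i" then have "v \<in> Xj" using v y1 by (auto simp: Xj_def XD)
              then show False using Min_le[OF finX, of v "Suc i"] v y_def by (auto simp: Xj_def)
            qed
            moreover have "?L v \<noteq> i"
            proof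
              assume "?L v = i" then have "v \<in> Xi" using v y1 by (auto simp: Xi_def XD)
              then show False using Xi1 v by auto
            qed
            ultimately show ?thesis using w1 y1 by auto
          qed
        qed
        then have "Xj \<subseteq> {y}" using Min_le[OF finX] y_def by (fastforce simp: Xj_def)
        then have "card Xj \<le> 1" using card_mono[of "{y}" Xj] by auto
        then show False using neg \<open>card Xi \<le> 1\<close> by auto
      next
        case False
        define A where "A = Xa \<union> Xb"
        have AD: "x \<in> A \<longleftrightarrow> 1 \<le> x \<and> x \<le> n \<and> (?L x = i - 2 \<or> ?L x = i - 1)" for x
          by (auto simp: A_def Xa_def Xb_def XD)
        have finA: "finite A" by (simp add: A_def Xa_def Xb_def finX)
        have Ane: "A \<noteq> {}" using False by (simp add: A_def)
        define a0 where "a0 = Min A"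
        define a1 where "a1 = Max A"
        have a0A: "a0 \<in> A" using Min_in[OF finA Ane] by (simp add: a0_def)
        have a1A: "a1 \<in> A" using Max_in[OF finA Ane] by (simp add: a1_def)
        have Aint: "A = {a0..a1}"
        proof
          show "A \<subseteq> {a0..a1}" using Min_le[OF finA] Max_ge[OF finA] by (auto simp: a0_def a1_def)
        next
          show "{a0..a1} \<subseteq> A"
          proof
            fix x assume x: "x \<in> {a0..a1}"
            have b0: "1 \<le> a0" "?L a0 = i - 2 \<or> ?L a0 = i - 1" using a0A by (auto simp: AD)
            have b1: "a1 \<le> n" "?L a1 = i - 2 \<or> ?L a1 = i - 1" using a1A by (auto simp: AD)
            have "?L a0 \<le> ?L x" "?L x \<le> ?L a1"
              using PhiL_mono[OF m, of a0 x] PhiL_mono[OF m, of x a1] x b0 b1 by auto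
            then show "x \<in> A" using x b0 b1 i unfolding AD by auto
          qed
        qed
        have cardA: "card A = card Xa + card Xb"
          unfolding A_def by (rule card_Un_disjoint) (use i in \<open>auto simp: Xa_def Xb_def finX XD\<close>)
        have cardA2: "card A = Suc a1 - a0" using Aint by simp
        have a0prop: "a0 \<le> x" if x: "1 \<le> x" "x < w" "i \<le> ?L x + 2" for x
        proof -
          have "?L x < i" using wmin x by auto
          then have "x \<in> A" using x w1 unfolding AD by auto
          then show ?thesis using Min_le[OF finA] a0_def by auto
        qed
        define hi where "hi = (if Xj = {} then 0 else Max Xj)"
        have hiprop: "y \<in> Xset n phi (Suc i)" if "v \<in> Xset n phi (Suc i)" "v < y" "y \<le> hi" for v y
        proof -
          have ne: "Xj \<noteq> {}" using that by (auto simp: Xj_def)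
          then have hX: "hi \<in> Xj" using Max_in[OF finX ne[unfolded Xj_def]] by (simp add: hi_def Xj_def)
          have v1: "1 \<le> v" "?L v = Suc i" using that by (auto simp: XD)
          have h1: "hi \<le> n" "?L hi = Suc i" using hX by (auto simp: Xj_def XD)
          have "?L v \<le> ?L y" "?L y \<le> ?L hi"
            using PhiL_mono[OF m, of v y] PhiL_mono[OF m, of y hi] that v1 h1 by auto
          then show ?thesis using that v1 h1 by (auto simp: XD)
        qed
        have MM: "card (bm n phi w) + (\<Sum>v\<in>Xj. if phi w v = Suc i then hi - v else 0)
           \<le> (\<Sum>u\<in>{u \<in> Xb. phi u w = i}. u - a0)"
          using main_move[OF m opt i wX[unfolded Xi_def] wmin a0prop hiprop] by (simp add: Xj_def Xb_def)
        define U where "U = {u \<in> Xb. phi u w = i}"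
        define P where "P = {x. 1 \<le> x \<and> x < w \<and> phi x w = i}"
        define p where "p = card P"
        have finP: "finite P" by (rule finite_subset[of _ "{..<w}"]) (auto simp: P_def)
        have "w \<noteq> 1" using w1 i by (auto simp: PhiL_def)
        then obtain x0 where "1 \<le> x0" "x0 < w" "phi x0 w = ?L w" using PhiL_ex[of w phi] w1 by auto
        then have "x0 \<in> P" using w1 by (auto simp: P_def)
        then have p1: "1 \<le> p" using finP by (auto simp: p_def card_gt_0_iff Suc_le_eq)
        have UP: "U \<subseteq> P"
        proof
          fix u assume u: "u \<in> U"
          then have u1: "1 \<le> u" "u \<le> n" "?L u = i - 1" "phi u w = i" by (auto simp: U_def Xb_def XD)
          have "u < w"
          proof (rule ccontr)
            assume "\<not> u < w" then have "?L w \<le> ?L u" using PhiL_mono[OF m w1(1), of u] u1 by auto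
            then show False using u1 w1 i by auto
          qed
          then show "u \<in> P" using u1 by (auto simp: P_def)
        qed
        have mp: "card U \<le> p" unfolding p_def by (rule card_mono[OF finP UP])
        have UA: "U \<subseteq> A" by (auto simp: U_def A_def)
        have mA: "card U \<le> card A" by (rule card_mono[OF finA UA])
        define B where "B = {y. w < y \<and> y \<le> n \<and> phi w y = i}"
        have finB: "finite B" by (rule finite_subset[of _ "{..n}"]) (auto simp: B_def)
        have "P \<times> B \<subseteq> bm n phi w" by (auto simp: P_def B_def bm_def)
        then have "card (P \<times> B) \<le> card (bm n phi w)" by (rule card_mono[OF bm_fin])
        then have pB: "p * card B \<le> card (bm n phi w)" by (simp add: p_def card_cartesian_product)
        define Q where "Q = {y \<in> Xj. phi w y = i}"
        have finQ: "finite Q" using finX by (auto simp: Q_def Xj_def)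
        have "(Xi - {w}) \<union> Q \<subseteq> B"
        proof
          fix y assume "y \<in> (Xi - {w}) \<union> Q"
          then show "y \<in> B"
          proof
            assume y: "y \<in> Xi - {w}"
            then have y1: "1 \<le> y" "y \<le> n" "?L y = i" by (auto simp: Xi_def XD)
            have "w \<le> y" using Min_le[OF finX, of y i] y w_def by (auto simp: Xi_def)
            then have wy: "w < y" using y by auto
            then have "phi w y = i" using between[OF m, of w y] w1 y1 by auto
            then show ?thesis using wy y1 by (auto simp: B_def)
          next
            assume y: "y \<in> Q"
            then have y1: "1 \<le> y" "y \<le> n" "?L y = Suc i" "phi w y = i" by (auto simp: Q_def Xj_def XD)
            then have "w < y" using wgt by auto
            then show ?thesis using y1 by (auto simp: B_def)
          qed
        qed
        moreover have "(Xi - {w}) \<inter> Q = {}" by (auto simp: Q_def Xi_def Xj_def XD)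
        ultimately have "card (Xi - {w}) + card Q \<le> card B"
          using card_mono[OF finB] card_Un_disjoint[of "Xi - {w}" Q] finQ finX
          by (metis Xi_def finite_Diff)
        moreover have "card (Xi - {w}) = card Xi - 1" using wX finX by (simp add: Xi_def)
        ultimately have cB: "card Xi - 1 + card Q \<le> card B" by simp
        have "p * (card Xi - 1) + p * card Q \<le> card (bm n phi w)"
          using pB mult_le_mono2[OF cB, of p] by (simp add: add_mult_distrib2)
        moreover have "p * card Q = (\<Sum>y\<in>Xj. if phi w y = i then p else 0)"
          using sum.inter_filter[OF finX[of "Suc i"], of "\<lambda>y. p" "\<lambda>y. phi w y = i"]
          by (simp add: Q_def Xj_def mult.commute)
        ultimately have LB1: "p * (card Xi - 1) + (\<Sum>y\<in>Xj. min p (hi - y))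
              \<le> card (bm n phi w) + (\<Sum>v\<in>Xj. if phi w v = Suc i then hi - v else 0)"
        proof -
          assume a1': "p * (card Xi - 1) + p * card Q \<le> card (bm n phi w)"
            and a2': "p * card Q = (\<Sum>y\<in>Xj. if phi w y = i then p else 0)"
          have "(\<Sum>y\<in>Xj. min p (hi - y)) \<le> (\<Sum>y\<in>Xj. (if phi w y = i then p else 0) + (if phi w y = Suc i then hi - y else 0))"
          proof (rule sum_mono)
            fix y assume y: "y \<in> Xj"
            then have y1: "1 \<le> y" "y \<le> n" "?L y = Suc i" by (auto simp: Xj_def XD)
            then have "w < y" using wgt by auto
            then have "phi w y = i \<or> phi w y = Suc i" using between[OF m, of w y] w1 y1 by auto
            then show "min p (hi - y) \<le> (if phi w y = i then p else 0) + (if phi w y = Suc i then hi - y else 0)"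
              by auto
          qed
          then show ?thesis using a1' a2' by (simp add: sum.distrib)
        qed
        have sumeq: "(\<Sum>y\<in>Xj. min p (hi - y)) = (\<Sum>j<card Xj. min p j)"
        proof (cases "Xj = {}")
          case True then show ?thesis by simp
        next
          case ne: False
          define lo where "lo = Min Xj"
          have loX: "lo \<in> Xj" using Min_in[OF finX ne[unfolded Xj_def]] by (simp add: lo_def Xj_def)
          have hX: "hi \<in> Xj" using Max_in[OF finX ne[unfolded Xj_def]] ne by (simp add: hi_def Xj_def)
          have "Xj = {lo..hi}"
          proof
            show "Xj \<subseteq> {lo..hi}" using Min_le[OF finX] Max_ge[OF finX] ne by (auto simp: lo_def hi_def Xj_def)
          next
            show "{lo..hi} \<subseteq> Xj"
            proof
              fix y assume y: "y \<in> {lo..hi}"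
              show "y \<in> Xj"
              proof (cases "y = lo")
                case True then show ?thesis using loX by simp
              next
                case False
                then show ?thesis using hiprop[of lo y] loX y by (auto simp: Xj_def)
              qed
            qed
          qed
          then show ?thesis using sum_reindex_rev[where f = "\<lambda>j. min p j" and lo = lo and hi = hi] by simp
        qed
        have UB: "(\<Sum>u\<in>U. u - a0) \<le> (\<Sum>j<card U. (a1 - a0) - j)"
        proof -
          have ge: "a0 \<le> u \<and> u \<le> a1" if "u \<in> U" for u using UA Aint that by auto
          have inj: "inj_on (\<lambda>u. u - a0) U"
          proof (rule inj_onI)
            fix x y assume "x \<in> U" "y \<in> U" "x - a0 = y - a0"
            then show "x = y" using ge[of x] ge[of y] by arith
          qed
          have finU: "finite U" using finA UA finite_subset by blast
          have "(\<Sum>u\<in>U. u - a0) = \<Sum>((\<lambda>u. u - a0) ` U)" by (simp add: sum.reindex[OF inj])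
          also have "\<dots> \<le> (\<Sum>j<card ((\<lambda>u. u - a0) ` U). (a1 - a0) - j)"
            by (rule sum_distinct_bound) (use finU ge in \<open>auto intro: diff_le_mono\<close>)
          also have "card ((\<lambda>u. u - a0) ` U) = card U" by (rule card_image[OF inj])
          finally show ?thesis .
        qed
        have "(\<Sum>j<card U. (a1 - a0) - j) < p * (card Xi - 1) + (\<Sum>j<card Xj. min p j)"
        proof (rule arith_final)
          have "a0 \<le> a1" using a0A Max_ge[OF finA] a1_def by auto
          then show "a1 - a0 + 4 \<le> card Xi + card Xj" using neg cardA cardA2 by arith
          show "card U \<le> p" by (rule mp)
          show "1 \<le> p" by (rule p1)
          show "card U \<le> a1 - a0 + 1" using mA cardA2 by arith
        qed
        then show False using LB1 sumeq MM UB by (simp add: U_def)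
      qed
    qed
  qed
qed


end
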